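(* Let $\langle X,d_X\rangle$ and $\langle Y,d_Y\rangle$ be metric spaces with completions $\langle X^*,d^*_X,\iota_X\rangle$ and $\langle Y^*,d^*_Y,\iota_Y\rangle$, and let $\hat f:X^*\to Y^*$ be continuous. (a) There is a continuous $f:\langle X,d_X\rangle\to\langle Y,d_Y\rangle$ with $\iota_Y\circ f=\hat f\circ\iota_X$ if and only if $\operatorname{ran}(\hat f\circ\iota_X)\subseteq\operatorname{ran}\iota_Y$. Moreover, such $f$ is unique and it is Cauchy-continuous. (b) There exist a cardinal $\eta\leq|X|+|Y|$, a metric $d'$ on $\eta$, and dense isometries $\iota:\langle Y,d_Y\rangle\to\langle\eta,d'\rangle$ and $\iota':\langle\eta,d'\rangle\to\langle Y^*,d^*_Y\rangle$ such that $\operatorname{ran}(\hat f\circ\iota_X)\subseteq\operatorname{ran}\iota'$.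
   Context: A dense isometry is a distance-preserving map (not necessarily onto) with dense image. A completion of $\langle X,d\rangle$ is a triple $\langle X^*,d^*,\iota\rangle$ with $\langle X^*,d^*\rangle$ complete and $\iota$ a dense isometry from $\langle X,d\rangle$ into it. A function between metric spaces is Cauchy-continuous if it maps Cauchy sequences to Cauchy sequences. *)

theory Defs
  imports "HOL-Analysis.Analysis"
begin

definition isometry_map :: "'a metric \<Rightarrow> 'b metric \<Rightarrow> ('a \<Rightarrow> 'b) \<Rightarrow> bool" where
  "isometry_map m1 m2 f \<longleftrightarrow>
     f \<in> mspace m1 \<rightarrow> mspace m2 \<and>
     (\<forall>x\<in>mspace m1. \<forall>y\<in>mspace m1. mdist m2 (f x) (f y) = mdist m1 x y)"

definition dense_isometry :: "'a metric \<Rightarrow> 'b metric \<Rightarrow> ('a \<Rightarrow> 'b) \<Rightarrow> bool" where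
  "dense_isometry m1 m2 f \<longleftrightarrow>
     isometry_map m1 m2 f \<and> mtopology_of m2 closure_of (f ` mspace m1) = mspace m2"

definition completion :: "'a metric \<Rightarrow> 'b metric \<Rightarrow> ('a \<Rightarrow> 'b) \<Rightarrow> bool" where
  "completion m ms \<iota> \<longleftrightarrow> mcomplete_of ms \<and> dense_isometry m ms \<iota>"

end

theory Submission
  imports Defs
begin

lemma iso_cont:
  assumes "isometry_map m1 m2 f"
  shows "continuous_map (mtopology_of m1) (mtopology_of m2) f"
proof -
  have "f ` mspace m1 \<subseteq> mspace m2" using assms unfolding isometry_map_def by auto
  moreover have "\<forall>a\<in>mspace m1. \<forall>\<epsilon>>0. \<exists>\<delta>>0. \<forall>x. x \<in> mspace m1 \<and> mdist m1 a x < \<delta> \<longrightarrow> mdist m2 (f a) (f x) < \<epsilon>"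
    using assms unfolding isometry_map_def by auto
  ultimately show ?thesis
    unfolding mtopology_of_def
    by (simp add: Metric_space.metric_continuous_map[OF Metric_space_mspace_mdist Metric_space_mspace_mdist])
qed

lemma iso_inj:
  assumes "isometry_map m1 m2 f" "x \<in> mspace m1" "y \<in> mspace m1" "f x = f y"
  shows "x = y"
proof -
  have "mdist m1 x y = 0" using assms unfolding isometry_map_def
    by (metis Pi_iff mdist_zero)
  then show ?thesis using assms(2,3) by simp
qed

lemma iso_MCauchy:
  assumes "isometry_map m1 m2 f" "Metric_space.MCauchy (mspace m1) (mdist m1) \<sigma>"
  shows "Metric_space.MCauchy (mspace m2) (mdist m2) (f \<circ> \<sigma>)"
  using assms unfolding isometry_map_def Metric_space.MCauchy_def[OF Metric_space_mspace_mdist]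
  by (auto simp: Pi_iff image_subset_iff)

lemma partA:
  assumes cX: "completion X Xs \<iota>X"
    and cY: "completion Y Ys \<iota>Y"
    and fh: "continuous_map (mtopology_of Xs) (mtopology_of Ys) fh"
    and sub: "fh ` \<iota>X ` mspace X \<subseteq> \<iota>Y ` mspace Y"
  shows "continuous_map (mtopology_of X) (mtopology_of Y) (\<lambda>x. inv_into (mspace Y) \<iota>Y (fh (\<iota>X x)))"
proof -
  let ?f = "\<lambda>x. inv_into (mspace Y) \<iota>Y (fh (\<iota>X x))"
  have isX: "isometry_map X Xs \<iota>X" and isY: "isometry_map Y Ys \<iota>Y"
    using cX cY unfolding completion_def dense_isometry_def by auto
  have g: "continuous_map (mtopology_of X) (mtopology_of Ys) (fh \<circ> \<iota>X)"
    using continuous_map_compose[OF iso_cont[OF isX] fh] .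
  have fin: "?f x \<in> mspace Y" and fe: "\<iota>Y (?f x) = fh (\<iota>X x)" if "x \<in> mspace X" for x
  proof -
    have "fh (\<iota>X x) \<in> \<iota>Y ` mspace Y" using sub that by blast
    then show "?f x \<in> mspace Y" "\<iota>Y (?f x) = fh (\<iota>X x)"
      by (auto intro: inv_into_into f_inv_into_f)
  qed
  have gc: "\<forall>a\<in>mspace X. \<forall>\<epsilon>>0. \<exists>\<delta>>0. \<forall>x. x \<in> mspace X \<and> mdist X a x < \<delta> \<longrightarrow> mdist Ys ((fh \<circ> \<iota>X) a) ((fh \<circ> \<iota>X) x) < \<epsilon>"
    using g unfolding mtopology_of_def
    by (simp add: Metric_space.metric_continuous_map[OF Metric_space_mspace_mdist Metric_space_mspace_mdist])
  have dd: "mdist Y (?f a) (?f x) = mdist Ys ((fh \<circ> \<iota>X) a) ((fh \<circ> \<iota>X) x)" if "a \<in> mspace X" "x \<in> mspace X" for a x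
    using isY fin[OF that(1)] fin[OF that(2)] fe[OF that(1)] fe[OF that(2)] unfolding isometry_map_def by (metis comp_apply)
  have "\<forall>a\<in>mspace X. \<forall>\<epsilon>>0. \<exists>\<delta>>0. \<forall>x. x \<in> mspace X \<and> mdist X a x < \<delta> \<longrightarrow> mdist Y (?f a) (?f x) < \<epsilon>"
    using gc dd by metis
  moreover have "?f ` mspace X \<subseteq> mspace Y" using fin by auto
  ultimately show ?thesis
    unfolding mtopology_of_def
    by (simp add: Metric_space.metric_continuous_map[OF Metric_space_mspace_mdist Metric_space_mspace_mdist])
qed

lemma partCauchy:
  assumes cX: "completion X Xs \<iota>X"
    and cY: "completion Y Ys \<iota>Y"
    and fh: "continuous_map (mtopology_of Xs) (mtopology_of Ys) fh"
    and fc: "continuous_map (mtopology_of X) (mtopology_of Y) f"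
    and fe: "\<forall>x\<in>mspace X. \<iota>Y (f x) = fh (\<iota>X x)"
  shows "Cauchy_continuous_map X Y f"
  unfolding Cauchy_continuous_map_def
proof (intro allI impI)
  fix \<sigma> assume s: "Metric_space.MCauchy (mspace X) (mdist X) \<sigma>"
  have isX: "isometry_map X Xs \<iota>X" and isY: "isometry_map Y Ys \<iota>Y"
    and comp: "mcomplete_of Xs"
    using cX cY unfolding completion_def dense_isometry_def by auto
  have s2: "Metric_space.MCauchy (mspace Xs) (mdist Xs) (\<iota>X \<circ> \<sigma>)"
    using iso_MCauchy[OF isX s] .
  then obtain l where l: "limitin (mtopology_of Xs) (\<iota>X \<circ> \<sigma>) l sequentially"
    using comp unfolding mcomplete_of_def mtopology_of_def
    Metric_space.mcomplete_def[OF Metric_space_mspace_mdist] by blast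
  have l2: "limitin (mtopology_of Ys) (fh \<circ> (\<iota>X \<circ> \<sigma>)) (fh l) sequentially"
    using continuous_map_limit[OF fh l] .
  have rs: "range \<sigma> \<subseteq> mspace X" using s
    unfolding Metric_space.MCauchy_def[OF Metric_space_mspace_mdist] by auto
  have fin: "f x \<in> mspace Y" if "x \<in> mspace X" for x
    using fc that by (metis continuous_map_def topspace_mtopology_of Pi_iff)
  have eq: "fh \<circ> (\<iota>X \<circ> \<sigma>) = \<iota>Y \<circ> (f \<circ> \<sigma>)" using fe rs by (auto simp: fun_eq_iff image_subset_iff)
  have r2: "range (fh \<circ> (\<iota>X \<circ> \<sigma>)) \<subseteq> mspace Ys"
    using eq rs fin isY unfolding isometry_map_def by auto
  have c: "Metric_space.MCauchy (mspace Ys) (mdist Ys) (\<iota>Y \<circ> (f \<circ> \<sigma>))"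
    using Metric_space.convergent_imp_MCauchy[OF Metric_space_mspace_mdist r2] l2 eq
    unfolding mtopology_of_def by metis
  show "Metric_space.MCauchy (mspace Y) (mdist Y) (f \<circ> \<sigma>)"
    using c rs fin isY
    unfolding Metric_space.MCauchy_def[OF Metric_space_mspace_mdist] isometry_map_def
    by (auto simp: image_subset_iff)
qed


lemma partB:
  fixes X :: "'a metric" and Y :: "'b metric"
    and Xs :: "'c metric" and Ys :: "'d metric"
    and \<iota>X :: "'a \<Rightarrow> 'c" and \<iota>Y :: "'b \<Rightarrow> 'd" and fh :: "'c \<Rightarrow> 'd"
  assumes cX: "completion X Xs \<iota>X"
    and cY: "completion Y Ys \<iota>Y"
    and fh: "continuous_map (mtopology_of Xs) (mtopology_of Ys) fh"
  shows "\<exists>(E :: ('a + 'b) metric) \<iota> \<iota>'.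
           (card_of (mspace E), card_of (mspace X <+> mspace Y)) \<in> ordLeq \<and>
           dense_isometry Y E \<iota> \<and> dense_isometry E Ys \<iota>' \<and>
           fh ` \<iota>X ` mspace X \<subseteq> \<iota>' ` mspace E"
proof -
  have isX: "isometry_map X Xs \<iota>X" and isY: "isometry_map Y Ys \<iota>Y"
    and dY: "mtopology_of Ys closure_of (\<iota>Y ` mspace Y) = mspace Ys"
    using cX cY unfolding completion_def dense_isometry_def by auto
  define g where "g = (\<lambda>x. fh (\<iota>X x))"
  define Z where "Z = g ` mspace X - \<iota>Y ` mspace Y"
  define S where "S = inv_into (mspace X) g ` Z"
  define M :: "('a+'b) set" where "M = Inr ` mspace Y \<union> Inl ` S"
  define j :: "('a+'b) \<Rightarrow> 'd" where "j = case_sum g \<iota>Y"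
  define d where "d = (\<lambda>u v. mdist Ys (j u) (j v))"
  have gin: "g x \<in> mspace Ys" if "x \<in> mspace X" for x
    using fh isX that unfolding g_def isometry_map_def
    by (metis Pi_iff continuous_map_def topspace_mtopology_of)
  have SX: "S \<subseteq> mspace X" unfolding S_def Z_def by (auto intro: inv_into_into)
  have gS: "z \<in> Z \<Longrightarrow> g (inv_into (mspace X) g z) = z" for z
    unfolding Z_def by (auto intro: f_inv_into_f)
  have jM: "j u \<in> mspace Ys" if "u \<in> M" for u
    using that SX isY gin unfolding M_def j_def isometry_map_def by auto
  have jinj: "u = v" if "u \<in> M" "v \<in> M" "j u = j v" for u v
  proof -
    { fix s y assume "s \<in> S" "y \<in> mspace Y" "j (Inl s) = j (Inr y)"
      then have False using gS unfolding S_def Z_def j_def by auto }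
    moreover
    { fix s t assume "s \<in> S" "t \<in> S" "j (Inl s) = j (Inl t)"
      then have "s = t" using gS unfolding S_def j_def by auto }
    moreover
    { fix s t assume "s \<in> mspace Y" "t \<in> mspace Y" "j (Inr s) = j (Inr t)"
      then have "s = t" using iso_inj[OF isY] unfolding j_def by auto }
    ultimately show ?thesis using that unfolding M_def
      by (elim UnE imageE) (metis, metis, metis, metis)
  qed
  have MS: "Metric_space M d"
  proof
    show "0 \<le> d x y" for x y unfolding d_def by simp
    show "d x y = d y x" for x y unfolding d_def by (simp add: mdist_commute)
    show "x \<in> M \<Longrightarrow> y \<in> M \<Longrightarrow> d x y = 0 \<longleftrightarrow> x = y" for x y
    proof -
      assume a: "x \<in> M" "y \<in> M"
      then have "mdist Ys (j x) (j y) = 0 \<longleftrightarrow> j x = j y" using jM by (simp add: mdist_zero)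
      then show ?thesis unfolding d_def using jinj[OF a] by blast
    qed
    show "x \<in> M \<Longrightarrow> y \<in> M \<Longrightarrow> z \<in> M \<Longrightarrow> d x z \<le> d x y + d y z" for x y z
      unfolding d_def by (rule mdist_triangle) (use jM in auto)
  qed
  define E where "E = metric (M, d)"
  have mE: "mspace E = M" and dE: "mdist E = d"
    unfolding E_def using Metric_space.mspace_metric[OF MS] Metric_space.mdist_metric[OF MS] by auto
  have card: "(card_of (mspace E), card_of (mspace X <+> mspace Y)) \<in> ordLeq"
    by (rule card_of_mono1) (use SX in \<open>auto simp: mE M_def Plus_def\<close>)
  have isoE: "isometry_map E Ys j"
    unfolding isometry_map_def mE dE d_def using jM by auto
  have isoI: "isometry_map Y E Inr"
    unfolding isometry_map_def mE dE d_def M_def j_def using isY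
    unfolding isometry_map_def by auto
  have closY: "p \<in> mspace Ys \<Longrightarrow> r > 0 \<Longrightarrow> \<exists>y\<in>mspace Y. mdist Ys p (\<iota>Y y) < r" for p r
    using dY unfolding mtopology_of_def
      Metric_space.metric_closure_of[OF Metric_space_mspace_mdist] by (auto simp: Metric_space.in_mball[OF Metric_space_mspace_mdist])
  have dens1: "mtopology_of E closure_of (Inr ` mspace Y) = mspace E"
  proof -
    have "e \<in> mtopology_of E closure_of (Inr ` mspace Y)" if e: "e \<in> mspace E" for e
    proof -
      have "\<forall>r>0. \<exists>y \<in> Inr ` mspace Y. y \<in> Metric_space.mball (mspace E) (mdist E) e r"
      proof (intro allI impI)
        fix r :: real assume "r > 0"
        then obtain y where y: "y \<in> mspace Y" "mdist Ys (j e) (\<iota>Y y) < r"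
          using closY jM e mE by blast
        have eM: "e \<in> M" using e mE by simp
        have "Inr y \<in> Metric_space.mball M d e r"
          unfolding Metric_space.in_mball[OF MS] using eM y
          by (simp add: d_def j_def M_def mdist_commute)
        then show "\<exists>y \<in> Inr ` mspace Y. y \<in> Metric_space.mball (mspace E) (mdist E) e r"
          using y(1) unfolding mE dE by blast
      qed
      then show ?thesis using e unfolding mtopology_of_def
        Metric_space.metric_closure_of[OF Metric_space_mspace_mdist] by auto
    qed
    then show ?thesis using closure_of_subset_topspace[of "mtopology_of E"] by auto
  qed
  have dens2: "mtopology_of Ys closure_of (j ` mspace E) = mspace Ys"
  proof -
    have "\<iota>Y ` mspace Y \<subseteq> j ` mspace E"
    proof
      fix z assume "z \<in> \<iota>Y ` mspace Y"
      then obtain y where "y \<in> mspace Y" "z = \<iota>Y y" by blast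
      then show "z \<in> j ` mspace E" unfolding mE M_def j_def
        by (intro image_eqI[of _ _ "Inr y"]) auto
    qed
    then have "mspace Ys \<subseteq> mtopology_of Ys closure_of (j ` mspace E)"
      using closure_of_mono dY by metis
    then show ?thesis using closure_of_subset_topspace[of "mtopology_of Ys"] by auto
  qed
  have ran: "fh ` \<iota>X ` mspace X \<subseteq> j ` mspace E"
  proof
    fix z assume "z \<in> fh ` \<iota>X ` mspace X"
    then have zg: "z \<in> g ` mspace X" unfolding g_def by auto
    show "z \<in> j ` mspace E"
    proof (cases "z \<in> \<iota>Y ` mspace Y")
      case True
      then obtain y where "y \<in> mspace Y" "z = \<iota>Y y" by blast
      then show ?thesis unfolding mE M_def j_def
        by (intro image_eqI[of _ _ "Inr y"]) auto
    next
      case False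
      then have "z \<in> Z" using zg Z_def by auto
      then show ?thesis using gS unfolding mE M_def j_def S_def
        by (metis (no_types, lifting) UnI2 image_eqI sum.simps(5))
    qed
  qed
  show ?thesis
    using card isoE isoI dens1 dens2 ran unfolding dense_isometry_def by blast
qed

theorem lemma4p3:
  fixes X :: "'a metric" and Y :: "'b metric"
    and Xs :: "'c metric" and Ys :: "'d metric"
    and \<iota>X :: "'a \<Rightarrow> 'c" and \<iota>Y :: "'b \<Rightarrow> 'd" and fh :: "'c \<Rightarrow> 'd"
  assumes cX: "completion X Xs \<iota>X"
    and cY: "completion Y Ys \<iota>Y"
    and fh: "continuous_map (mtopology_of Xs) (mtopology_of Ys) fh"
  shows
    "((\<exists>f. continuous_map (mtopology_of X) (mtopology_of Y) f \<and>
            (\<forall>x\<in>mspace X. \<iota>Y (f x) = fh (\<iota>X x)))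
        \<longleftrightarrow> fh ` \<iota>X ` mspace X \<subseteq> \<iota>Y ` mspace Y)
     \<and> (\<forall>f g. continuous_map (mtopology_of X) (mtopology_of Y) f \<and>
              (\<forall>x\<in>mspace X. \<iota>Y (f x) = fh (\<iota>X x)) \<and>
              continuous_map (mtopology_of X) (mtopology_of Y) g \<and>
              (\<forall>x\<in>mspace X. \<iota>Y (g x) = fh (\<iota>X x))
              \<longrightarrow> (\<forall>x\<in>mspace X. f x = g x))
     \<and> (\<forall>f. continuous_map (mtopology_of X) (mtopology_of Y) f \<and>
              (\<forall>x\<in>mspace X. \<iota>Y (f x) = fh (\<iota>X x))
              \<longrightarrow> Cauchy_continuous_map X Y f)
     \<and> (\<exists>(E :: ('a + 'b) metric) \<iota> \<iota>'.
           (card_of (mspace E), card_of (mspace X <+> mspace Y)) \<in> ordLeq \<and>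
           dense_isometry Y E \<iota> \<and> dense_isometry E Ys \<iota>' \<and>
           fh ` \<iota>X ` mspace X \<subseteq> \<iota>' ` mspace E)"
proof (intro conjI)
  have isY: "isometry_map Y Ys \<iota>Y"
    using cY unfolding completion_def dense_isometry_def by auto
  have fin: "f x \<in> mspace Y" if "continuous_map (mtopology_of X) (mtopology_of Y) f" "x \<in> mspace X" for f x
    using that by (metis continuous_map_def topspace_mtopology_of Pi_iff)
  show "(\<exists>f. continuous_map (mtopology_of X) (mtopology_of Y) f \<and>
            (\<forall>x\<in>mspace X. \<iota>Y (f x) = fh (\<iota>X x)))
        \<longleftrightarrow> fh ` \<iota>X ` mspace X \<subseteq> \<iota>Y ` mspace Y"
  proof
    assume "\<exists>f. continuous_map (mtopology_of X) (mtopology_of Y) f \<and>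
            (\<forall>x\<in>mspace X. \<iota>Y (f x) = fh (\<iota>X x))"
    then obtain f where "continuous_map (mtopology_of X) (mtopology_of Y) f"
       "\<forall>x\<in>mspace X. \<iota>Y (f x) = fh (\<iota>X x)" by blast
    then show "fh ` \<iota>X ` mspace X \<subseteq> \<iota>Y ` mspace Y" using fin by (auto intro!: image_eqI)
  next
    assume sub: "fh ` \<iota>X ` mspace X \<subseteq> \<iota>Y ` mspace Y"
    have "\<forall>x\<in>mspace X. \<iota>Y (inv_into (mspace Y) \<iota>Y (fh (\<iota>X x))) = fh (\<iota>X x)"
    proof
      fix x assume "x \<in> mspace X"
      then have "fh (\<iota>X x) \<in> \<iota>Y ` mspace Y" using sub by blast
      then show "\<iota>Y (inv_into (mspace Y) \<iota>Y (fh (\<iota>X x))) = fh (\<iota>X x)" by (rule f_inv_into_f)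
    qed
    then show "\<exists>f. continuous_map (mtopology_of X) (mtopology_of Y) f \<and>
            (\<forall>x\<in>mspace X. \<iota>Y (f x) = fh (\<iota>X x))"
      using partA[OF cX cY fh sub] by blast
  qed
  show "\<forall>f g. continuous_map (mtopology_of X) (mtopology_of Y) f \<and>
              (\<forall>x\<in>mspace X. \<iota>Y (f x) = fh (\<iota>X x)) \<and>
              continuous_map (mtopology_of X) (mtopology_of Y) g \<and>
              (\<forall>x\<in>mspace X. \<iota>Y (g x) = fh (\<iota>X x))
              \<longrightarrow> (\<forall>x\<in>mspace X. f x = g x)"
    using fin iso_inj[OF isY] by metis
  show "\<forall>f. continuous_map (mtopology_of X) (mtopology_of Y) f \<and>
              (\<forall>x\<in>mspace X. \<iota>Y (f x) = fh (\<iota>X x))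
              \<longrightarrow> Cauchy_continuous_map X Y f"
    using partCauchy[OF cX cY fh] by blast
  show "\<exists>(E :: ('a + 'b) metric) \<iota> \<iota>'.
           (card_of (mspace E), card_of (mspace X <+> mspace Y)) \<in> ordLeq \<and>
           dense_isometry Y E \<iota> \<and> dense_isometry E Ys \<iota>' \<and>
           fh ` \<iota>X ` mspace X \<subseteq> \<iota>' ` mspace E"
    using partB[OF cX cY fh] .
qed

end
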